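(* Let $n\ge 2$, $0<p<q$ be real numbers and let $A$ be the $n\times n$ matrix with columns $a_k=q e_k-p e_{k+1}$ ($1\le k\le n-1$) and $a_n=q e_n+p e_1$. Let $S=(s_{i,j})_{i,j=1}^n$ be a signed permutation matrix, i.e. $S\in\{0,\pm1\}^{n\times n}$ and every row and every column of $S$ contains exactly one nonzero entry. Then $S(A\mathbb{Z}^n)=A\mathbb{Z}^n$ if and only if all of the following hold: $s_{i,j}=s_{i+1,j+1}$ for all $i,j<n$; $s_{i,n}=-s_{i+1,1}$ and $s_{n,j}=-s_{1,j+1}$ for all $i,j<n$; and $s_{n,n}=s_{1,1}$.
   Context: $e_i$ denotes the $i$-th standard unit vector of $\mathbb{R}^n$. *)

theory Defs
  imports Complex_Main
begin

text \<open>Vectors in R^n and n x n matrices are represented with explicit index range {1..n}: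
  vectors as nat => real, matrices as nat => nat => real (entry (i,j) = M i j).
  Only entries with indices in {1..n} are relevant.\<close>

definition mat_vec :: "nat \<Rightarrow> (nat \<Rightarrow> nat \<Rightarrow> real) \<Rightarrow> (nat \<Rightarrow> real) \<Rightarrow> (nat \<Rightarrow> real)" where
  "mat_vec n M x = (\<lambda>i. if i \<in> {1..n} then (\<Sum>j=1..n. M i j * x j) else 0)"

definition lattice :: "nat \<Rightarrow> (nat \<Rightarrow> nat \<Rightarrow> real) \<Rightarrow> (nat \<Rightarrow> real) set" where
  "lattice n M = {mat_vec n M z | z. \<forall>j\<in>{1..n}. z j \<in> \<int>}"

definition matA :: "nat \<Rightarrow> real \<Rightarrow> real \<Rightarrow> nat \<Rightarrow> nat \<Rightarrow> real" where
  "matA n p q i k =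
     (if k < n then (if i = k then q else if i = k + 1 then - p else 0)
      else (if i = n then q else if i = 1 then p else 0))"

definition signed_perm_matrix :: "nat \<Rightarrow> (nat \<Rightarrow> nat \<Rightarrow> real) \<Rightarrow> bool" where
  "signed_perm_matrix n S \<longleftrightarrow>
     (\<forall>i\<in>{1..n}. \<forall>j\<in>{1..n}. S i j \<in> {-1, 0, 1}) \<and>
     (\<forall>i\<in>{1..n}. \<exists>!j. j \<in> {1..n} \<and> S i j \<noteq> 0) \<and>
     (\<forall>j\<in>{1..n}. \<exists>!i. i \<in> {1..n} \<and> S i j \<noteq> 0)"

end

theory Submission
  imports Defs
begin

definition mmul :: "nat \<Rightarrow> (nat\<Rightarrow>nat\<Rightarrow>real) \<Rightarrow> (nat\<Rightarrow>nat\<Rightarrow>real) \<Rightarrow> nat \<Rightarrow> nat \<Rightarrow> real" where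
  "mmul n M N i k = (\<Sum>j=1..n. M i j * N j k)"

lemma mat_vec_in: "i \<in> {1..n} \<Longrightarrow> mat_vec n M x i = (\<Sum>j=1..n. M i j * x j)"
  by (simp add: mat_vec_def)

lemma mat_vec_mmul: "mat_vec n M (mat_vec n N x) = mat_vec n (mmul n M N) x"
proof
  fix i
  show "mat_vec n M (mat_vec n N x) i = mat_vec n (mmul n M N) x i"
  proof (cases "i \<in> {1..n}")
    case True
    have "(\<Sum>j=1..n. M i j * mat_vec n N x j) = (\<Sum>j=1..n. M i j * (\<Sum>k=1..n. N j k * x k))"
      by (rule sum.cong) (auto simp: mat_vec_def)
    also have "\<dots> = (\<Sum>j=1..n. \<Sum>k=1..n. M i j * N j k * x k)"
      by (simp add: sum_distrib_left mult.assoc)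
    also have "\<dots> = (\<Sum>k=1..n. \<Sum>j=1..n. M i j * N j k * x k)"
      by (rule sum.swap)
    also have "\<dots> = (\<Sum>k=1..n. mmul n M N i k * x k)"
      by (simp add: mmul_def sum_distrib_right)
    finally show ?thesis using True by (simp only: mat_vec_in)
  qed (auto simp: mat_vec_def)
qed

lemma mat_vec_cong: "(\<forall>i\<in>{1..n}. \<forall>j\<in>{1..n}. M i j = N i j) \<Longrightarrow> mat_vec n M x = mat_vec n N x"
  unfolding mat_vec_def by (auto intro!: sum.cong)

lemma mat_vec_cong2: "(\<forall>j\<in>{1..n}. x j = y j) \<Longrightarrow> mat_vec n M x = mat_vec n M y"
  unfolding mat_vec_def by (auto intro!: sum.cong)

lemma mat_vec_unit: "k\<in>{1..n} \<Longrightarrow> i\<in>{1..n} \<Longrightarrow> mat_vec n M (\<lambda>j. if j = k then 1 else 0) i = M i k"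
  unfolding mat_vec_def by (simp add: if_distrib cong: if_cong)

lemma colA_lt: "1 \<le> k \<Longrightarrow> k < n \<Longrightarrow> matA n p q j k = (if j = k then q else 0) + (if j = k+1 then -p else 0)"
  by (auto simp: matA_def)

lemma colA_n: "n \<ge> 2 \<Longrightarrow> matA n p q j n = (if j = n then q else 0) + (if j = 1 then p else 0)"
  by (auto simp: matA_def)

lemma rowA: "n\<ge>2 \<Longrightarrow> 2 \<le> i \<Longrightarrow> i \<le> n \<Longrightarrow> j\<in>{1..n} \<Longrightarrow> matA n p q i j = (if j = i then q else 0) + (if j = i - 1 then -p else 0)"
  by (auto simp: matA_def)

lemma rowA1: "n \<ge> 2 \<Longrightarrow> j\<in>{1..n} \<Longrightarrow> matA n p q 1 j = (if j = 1 then q else 0) + (if j = n then p else 0)"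
  by (auto simp: matA_def)

lemma MA_lt: assumes "1 \<le> k" "k < n"
  shows "mmul n M (matA n p q) i k = q * M i k - p * M i (k+1)"
proof -
  have "mmul n M (matA n p q) i k = (\<Sum>j=1..n. (if j = k then M i j * q else 0) + (if j = k+1 then - M i j * p else 0))"
    unfolding mmul_def colA_lt[OF assms] by (rule sum.cong) auto
  also have "\<dots> = q * M i k - p * M i (k+1)" using assms by (simp add: sum.distrib)
  finally show ?thesis .
qed

lemma MA_n: assumes "n \<ge> 2"
  shows "mmul n M (matA n p q) i n = q * M i n + p * M i 1"
proof -
  have "mmul n M (matA n p q) i n = (\<Sum>j=1..n. (if j = n then M i j * q else 0) + (if j = 1 then M i j * p else 0))"
    unfolding mmul_def colA_n[OF assms] by (rule sum.cong) (use assms in auto)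
  also have "\<dots> = q * M i n + p * M i 1"
  proof -
    have "1 \<in> {1..n}" "n \<in> {1..n}" using assms by auto
    then show ?thesis by (simp add: sum.distrib sum.delta)
  qed
  finally show ?thesis .
qed

lemma AM_ge2: assumes "n \<ge> 2" "2 \<le> i" "i \<le> n"
  shows "mmul n (matA n p q) M i k = q * M i k - p * M (i-1) k"
proof -
  have "mmul n (matA n p q) M i k = (\<Sum>j=1..n. (if j = i then q * M j k else 0) + (if j = i - 1 then - p * M j k else 0))"
    unfolding mmul_def by (rule sum.cong) (use assms in \<open>auto simp: rowA\<close>)
  also have "\<dots> = q * M i k - p * M (i-1) k"
  proof -
    have "i - 1 \<in> {1..n}" "i \<in> {1..n}" using assms by auto
    then show ?thesis by (simp add: sum.distrib sum.delta)
  qed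
  finally show ?thesis .
qed

lemma AM_1: assumes "n \<ge> 2"
  shows "mmul n (matA n p q) M 1 k = q * M 1 k + p * M n k"
proof -
  have "mmul n (matA n p q) M 1 k = (\<Sum>j=1..n. (if j = 1 then q * M j k else 0) + (if j = n then p * M j k else 0))"
    unfolding mmul_def by (rule sum.cong) (use assms in \<open>auto simp: matA_def\<close>)
  also have "\<dots> = q * M 1 k + p * M n k" using assms by (simp add: sum.distrib)
  finally show ?thesis .
qed

definition matB :: "nat \<Rightarrow> real \<Rightarrow> real \<Rightarrow> nat \<Rightarrow> nat \<Rightarrow> real" where
  "matB n p q j i = (if i \<le> j then q^(n-1-(j-i)) * p^(j-i) else - (q^(i-j-1) * p^(n+j-i))) / (q^n+p^n)"

lemma BA: assumes n: "n \<ge> 2" and pq: "0 < p" "p < q" and j: "j \<in> {1..n}" and k: "k \<in> {1..n}"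
  shows "mmul n (matB n p q) (matA n p q) j k = (if j = k then 1 else 0)"
proof -
  have D: "q^n + p^n > 0" using pq by (simp add: add_pos_pos)
  show ?thesis
  proof (cases "k < n")
    case True
    then have e: "mmul n (matB n p q) (matA n p q) j k = q * matB n p q j k - p * matB n p q j (k+1)"
      using k by (intro MA_lt) auto
    consider "k+1 \<le> j" | "j = k" | "j < k" by linarith
    then show ?thesis
    proof cases
      case 1
      define d where "d = j - (k+1)"
      have jd: "j = k+1+d" using 1 unfolding d_def by auto
      define e where "e = n - (d+2)"
      have ne: "n = d+2+e" using j k jd unfolding e_def by auto
      have "q * matB n p q j k - p * matB n p q j (k+1) = 0"
        unfolding matB_def using jd ne by simp
      then show ?thesis using e 1 by simp
    next
      case 2
      obtain m where nm: "n = Suc m" using n by (cases n) auto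
      have "q * matB n p q j k - p * matB n p q j (k+1) = 1"
        unfolding matB_def using 2 nm D by (simp add: add_divide_distrib[symmetric])
      then show ?thesis using e 2 by simp
    next
      case 3
      define d where "d = k - (j+1)"
      have kd: "k = j+1+d" using 3 unfolding d_def by auto
      define e where "e = n - (j+d+2)"
      have ne: "n = j+d+2+e" using True kd unfolding e_def by auto
      have "q * matB n p q j k - p * matB n p q j (k+1) = 0"
        unfolding matB_def using kd ne by simp
      then show ?thesis using e 3 by simp
    qed
  next
    case False
    then have kn: "k = n" using k by auto
    have e: "mmul n (matB n p q) (matA n p q) j k = q * matB n p q j n + p * matB n p q j 1"
      using kn n by (simp add: MA_n)
    show ?thesis
    proof (cases "j = n")
      case True
      obtain m where nm: "n = Suc m" using n by (cases n) auto
      have "q * matB n p q j n + p * matB n p q j 1 = 1"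
        unfolding matB_def using True nm D by (simp add: add_divide_distrib[symmetric])
      then show ?thesis using e True kn by simp
    next
      case False
      obtain j' where jj: "j = Suc j'" using j by (cases j) auto
      define e where "e = n - (j+1)"
      have ne: "n = j+1+e" using False j unfolding e_def by auto
      have "q * matB n p q j n + p * matB n p q j 1 = 0"
        unfolding matB_def using jj ne by simp
      then show ?thesis using e False kn by simp
    qed
  qed
qed

lemma int_small: "(y::real) \<in> \<int> \<Longrightarrow> \<bar>y\<bar> < 1 \<Longrightarrow> y = 0"
  by (auto elim!: Ints_cases)

lemma frac1: fixes P X Q e1 e2 :: real
  assumes "0 < P" "P < X" "X < Q" "e1 \<in> {-1,1}" "e2 \<in> {-1,1}" "(e1*X + e2*P)/(Q+P) \<in> \<int>"
  shows False
proof -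
  have a: "e1*X + e2*P \<noteq> 0" "\<bar>e1*X + e2*P\<bar> < Q+P" using assms by auto
  have "(e1*X + e2*P)/(Q+P) \<noteq> 0" using a assms by auto
  moreover have "\<bar>(e1*X + e2*P)/(Q+P)\<bar> < 1" using a assms by (simp add: abs_divide)
  ultimately show False using int_small assms(6) by blast
qed

lemma frac2: fixes P Q e1 e2 :: real
  assumes "0 < P" "P < Q" "e1 \<in> {-1,1}" "e2 \<in> {-1,1}" "(e1*Q + e2*P)/(Q+P) \<in> \<int>"
  shows "e2 = e1"
proof (rule ccontr)
  assume ne: "e2 \<noteq> e1"
  have a: "e1*Q + e2*P \<noteq> 0" "\<bar>e1*Q + e2*P\<bar> < Q+P" using assms ne by auto
  have "(e1*Q + e2*P)/(Q+P) \<noteq> 0" using a assms by auto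
  moreover have "\<bar>(e1*Q + e2*P)/(Q+P)\<bar> < 1" using a assms by (simp add: abs_divide)
  ultimately show False using int_small assms(5) by blast
qed

lemma bound: fixes p q :: real
  assumes "0<p" "p<q" "1 \<le> t" "t < n"
  shows "p^n < q^t * p^(n-t) \<and> q^t*p^(n-t) < q^n"
proof -
  have n1: "p^n = p^t * p^(n-t)" "q^n = q^t * q^(n-t)" using assms by (simp_all add: power_add[symmetric])
  have "p^t < q^t" using assms by (intro power_strict_mono) auto
  moreover have "p^(n-t) < q^(n-t)" using assms by (intro power_strict_mono) auto
  moreover have "0 < p^(n-t)" "0 < q^t" using assms by auto
  ultimately show ?thesis unfolding n1 by (simp add: mult_strict_right_mono mult_strict_left_mono)
qed

lemma key:
  assumes n: "n \<ge> 2" and pq: "0 < p" "p < q" and a: "a \<in> {1..n}" and b: "b \<in> {1..n}" and ab: "a \<noteq> b"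
    and e: "e1 \<in> {-1,1}" "e2 \<in> {-1,1}"
    and H: "\<forall>j\<in>{1..n}. q*e1*matB n p q j a - p*e2*matB n p q j b \<in> \<int>"
  shows "(a<n \<and> b=a+1 \<and> e2=e1) \<or> (a=n \<and> b=1 \<and> e2=-e1)"
proof -
  define D where "D = q^n + p^n"
  have P: "0 < p^n" "p^n < q^n" using pq n by (auto intro: power_strict_mono)
  show ?thesis
  proof (cases "b \<ge> 2")
    case True
    then obtain b' where bb: "b = Suc b'" "b' \<ge> 1" by (cases b) auto
    have Hj: "q*e1*matB n p q b' a - p*e2*matB n p q b' b \<in> \<int>" using H bb b by auto
    show ?thesis
    proof (cases "a \<le> b'")
      case True
      define m where "m = b' - a"
      have bm: "b' = a + m" using True m_def by auto
      define f where "f = n - (m+2)"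
      have nf: "n = m+2+f" using bm bb b a unfolding f_def by auto
      have v: "q*e1*matB n p q b' a - p*e2*matB n p q b' b = (e1 * (q^(f+2)*p^m) + e2*p^n)/D"
        unfolding matB_def D_def using bm bb nf by (simp add: diff_divide_distrib add_divide_distrib algebra_simps)
      show ?thesis
      proof (cases "m = 0")
        case True
        have "(e1 * q^n + e2*p^n)/(q^n+p^n) \<in> \<int>" using Hj v True nf D_def by simp
        then have "e2 = e1" using frac2[OF P e] by blast
        then show ?thesis using True bm bb b by auto
      next
        case False
        have bd: "p^n < q^(f+2) * p^(n-(f+2)) \<and> q^(f+2)*p^(n-(f+2)) < q^n"
          using bound[OF pq, of "f+2" n] False nf by auto
        have "n - (f+2) = m" using nf by simp
        then have "(e1 * (q^(f+2)*p^m) + e2*p^n)/(q^n+p^n) \<in> \<int>" using Hj v D_def by simp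
        then show ?thesis using frac1[OF P(1) _ _ e] bd \<open>n - (f+2) = m\<close> by auto
      qed
    next
      case False
      define m where "m = a - b - 1"
      have am: "a = b + 1 + m" using False bb ab m_def by auto
      define f where "f = n - a"
      have nf: "n = a + f" using a f_def by auto
      have v: "q*e1*matB n p q b' a - p*e2*matB n p q b' b = ((-e1) * (q^(m+2)*p^(b'+f)) + e2*p^n)/D"
        unfolding matB_def D_def using am bb nf by (simp add: diff_divide_distrib add_divide_distrib algebra_simps)
      have bd: "p^n < q^(m+2) * p^(n-(m+2)) \<and> q^(m+2)*p^(n-(m+2)) < q^n"
        using bound[OF pq, of "m+2" n] am nf bb by auto
      have "n - (m+2) = b'+f" using am nf bb by simp
      have e': "-e1 \<in> {-1,1}" using e by auto
      have "((-e1) * (q^(m+2)*p^(b'+f)) + e2*p^n)/(q^n+p^n) \<in> \<int>" using Hj v D_def by simp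
      then show ?thesis using frac1[OF P(1) _ _ e' e(2)] bd \<open>n - (m+2) = b'+f\<close> by auto
    qed
  next
    case False
    then have b1: "b = 1" using b by auto
    have Hj: "q*e1*matB n p q n a - p*e2*matB n p q n b \<in> \<int>" using H n by auto
    obtain a' where aa: "a = Suc a'" "a' \<ge> 1" using a ab b1 by (cases a) auto
    define f where "f = n - a"
    have nf: "n = a + f" using a f_def by auto
    have v: "q*e1*matB n p q n a - p*e2*matB n p q n b = (e1 * (q^a*p^f) + (-e2)*p^n)/D"
      unfolding matB_def D_def using aa b1 nf by (simp add: diff_divide_distrib add_divide_distrib algebra_simps)
    have e': "-e2 \<in> {-1,1}" using e by auto
    show ?thesis
    proof (cases "f = 0")
      case True
      have "(e1 * q^n + (-e2)*p^n)/(q^n+p^n) \<in> \<int>" using Hj v True nf D_def by simp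
      then have "-e2 = e1" using frac2[OF P e(1) e'] by blast
      then show ?thesis using True nf b1 by auto
    next
      case False
      have bd: "p^n < q^a * p^(n-a) \<and> q^a*p^(n-a) < q^n"
        using bound[OF pq, of a n] False nf aa by auto
      have "(e1 * (q^a*p^f) + (-e2)*p^n)/(q^n+p^n) \<in> \<int>" using Hj v D_def by simp
      then show ?thesis using frac1[OF P(1) _ _ e(1) e'] bd nf by auto
    qed
  qed
qed

lemma sp_col: "signed_perm_matrix n S \<Longrightarrow> k\<in>{1..n} \<Longrightarrow> \<exists>i\<in>{1..n}. S i k \<noteq> 0 \<and> (\<forall>i'\<in>{1..n}. S i' k \<noteq> 0 \<longrightarrow> i' = i)"
proof -
  assume "signed_perm_matrix n S" "k\<in>{1..n}"
  then have "\<exists>!i. i \<in> {1..n} \<and> S i k \<noteq> 0" unfolding signed_perm_matrix_def by blast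
  then show ?thesis by (metis)
qed

lemma sp_row: "signed_perm_matrix n S \<Longrightarrow> i\<in>{1..n} \<Longrightarrow> \<exists>j\<in>{1..n}. S i j \<noteq> 0 \<and> (\<forall>j'\<in>{1..n}. S i j' \<noteq> 0 \<longrightarrow> j' = j)"
proof -
  assume "signed_perm_matrix n S" "i\<in>{1..n}"
  then have "\<exists>!j. j \<in> {1..n} \<and> S i j \<noteq> 0" unfolding signed_perm_matrix_def by blast
  then show ?thesis by (metis)
qed

lemma sp_val: "signed_perm_matrix n S \<Longrightarrow> i\<in>{1..n} \<Longrightarrow> j\<in>{1..n} \<Longrightarrow> S i j \<in> {-1,0,1}"
  unfolding signed_perm_matrix_def by blast

lemma colsum:
  fixes S :: "nat \<Rightarrow> nat \<Rightarrow> real" and f :: "nat \<Rightarrow> real"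
  assumes "i0 \<in> {1..n}" "\<forall>i\<in>{1..n}. S i k \<noteq> 0 \<longrightarrow> i = i0"
  shows "(\<Sum>i=1..n. f i * S i k) = f i0 * S i0 k"
proof -
  have "(\<Sum>i=1..n. f i * S i k) = (\<Sum>i=1..n. if i = i0 then f i0 * S i0 k else 0)"
  proof (rule sum.cong)
    fix i assume "i \<in> {1..n}"
    then show "f i * S i k = (if i = i0 then f i0 * S i0 k else 0)" using assms(2) by (cases "i = i0") auto
  qed simp
  also have "\<dots> = f i0 * S i0 k" using assms(1) by simp
  finally show ?thesis .
qed

lemma ortho:
  assumes sp: "signed_perm_matrix n S" and i: "i\<in>{1..n}" and k: "k\<in>{1..n}"
  shows "mmul n S (\<lambda>a b. S b a) i k = (if i = k then 1 else 0)"
proof (cases "i = k")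
  case True
  obtain j0 where j0: "j0\<in>{1..n}" "S i j0 \<noteq> 0" "\<forall>j'\<in>{1..n}. S i j' \<noteq> 0 \<longrightarrow> j' = j0"
    using sp_row[OF sp i] by blast
  have v: "S i j0 \<in> {-1,0,1}" using sp_val[OF sp i j0(1)] .
  have "mmul n S (\<lambda>a b. S b a) i k = (\<Sum>j=1..n. S i j * S i j)" using True by (simp add: mmul_def)
  also have "\<dots> = (\<Sum>j=1..n. if j = j0 then 1 else 0)"
  proof (rule sum.cong)
    fix j assume j: "j \<in> {1..n}"
    show "S i j * S i j = (if j = j0 then 1 else 0)"
    proof (cases "j = j0")
      case True
      then show ?thesis using v j0(2) by auto
    next
      case False
      then have "S i j = 0" using j0(3) j by blast
      then show ?thesis using False by simp
    qed
  qed simp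
  also have "\<dots> = 1" using j0(1) by simp
  finally show ?thesis using True by simp
next
  case False
  have "mmul n S (\<lambda>a b. S b a) i k = (\<Sum>j=1..n. 0)" unfolding mmul_def
  proof (rule sum.cong)
    fix j assume j: "j \<in> {1..n}"
    obtain i0 where "i0\<in>{1..n}" "\<forall>i'\<in>{1..n}. S i' j \<noteq> 0 \<longrightarrow> i' = i0" using sp_col[OF sp j] by blast
    then have "S i j = 0 \<or> S k j = 0" using i k False by blast
    then show "S i j * S k j = 0" by auto
  qed simp
  then show ?thesis using False by simp
qed

lemma lat_int:
  assumes sp: "signed_perm_matrix n S" and z: "\<forall>j\<in>{1..n}. z j \<in> \<int>"
  shows "\<forall>j\<in>{1..n}. mat_vec n S z j \<in> \<int>"
proof
  fix j assume j: "j\<in>{1..n}"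
  have "\<forall>i\<in>{1..n}. S j i * z i \<in> \<int>"
  proof
    fix i assume i: "i \<in> {1..n}"
    have "S j i \<in> \<int>" using sp_val[OF sp j i] by auto
    then show "S j i * z i \<in> \<int>" using z i by auto
  qed
  then show "mat_vec n S z j \<in> \<int>" using j by (simp only: mat_vec_in) (rule Ints_sum, auto)
qed

lemma backward:
  assumes n: "n \<ge> 2" and sp: "signed_perm_matrix n S"
    and c1: "\<forall>i\<in>{1..<n}. \<forall>j\<in>{1..<n}. S i j = S (i+1) (j+1)"
    and c2: "\<forall>i\<in>{1..<n}. S i n = - S (i+1) 1"
    and c3: "\<forall>j\<in>{1..<n}. S n j = - S 1 (j+1)"
    and c4: "S n n = S 1 1"
  shows "mat_vec n S ` lattice n (matA n p q) = lattice n (matA n p q)"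
proof -
  let ?A = "matA n p q"
  have comm: "\<forall>i\<in>{1..n}. \<forall>k\<in>{1..n}. mmul n S ?A i k = mmul n ?A S i k"
  proof (intro ballI)
    fix i k assume i: "i\<in>{1..n}" and k: "k\<in>{1..n}"
    show "mmul n S ?A i k = mmul n ?A S i k"
    proof (cases "k < n")
      case True
      show ?thesis
      proof (cases "i = 1")
        case True
        have "S n k = - S 1 (k+1)" using c3 k \<open>k<n\<close> by auto
        then show ?thesis using \<open>k<n\<close> k True MA_lt[of k n S p q 1] AM_1[OF n, of p q S k] by simp
      next
        case False
        then have "i-1 \<in> {1..<n}" "k \<in> {1..<n}" "i - 1 + 1 = i" using i k \<open>k<n\<close> by auto
        then have "S (i-1) k = S i (k+1)" using c1 by metis
        then show ?thesis using \<open>k<n\<close> k n i False by (simp add: MA_lt AM_ge2)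
      qed
    next
      case False
      then have kn: "k = n" using k by auto
      show ?thesis
      proof (cases "i = 1")
        case True
        then show ?thesis using kn c4 MA_n[OF n, of S p q 1] AM_1[OF n, of p q S n] by simp
      next
        case False
        then have "i-1 \<in> {1..<n}" "i - 1 + 1 = i" using i by auto
        then have "S (i-1) n = - S i 1" using c2 by metis
        then show ?thesis using kn n i False by (simp add: MA_n AM_ge2)
      qed
    qed
  qed
  show ?thesis
  proof
    show "mat_vec n S ` lattice n ?A \<subseteq> lattice n ?A"
    proof
      fix x assume "x \<in> mat_vec n S ` lattice n ?A"
      then obtain z where z: "\<forall>j\<in>{1..n}. z j \<in> \<int>" and x: "x = mat_vec n S (mat_vec n ?A z)"
        unfolding lattice_def by auto
      have "x = mat_vec n ?A (mat_vec n S z)"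
        using x mat_vec_cong[OF comm] by (simp add: mat_vec_mmul)
      then show "x \<in> lattice n ?A" unfolding lattice_def using lat_int[OF sp z] by blast
    qed
  next
    show "lattice n ?A \<subseteq> mat_vec n S ` lattice n ?A"
    proof
      fix x assume "x \<in> lattice n ?A"
      then obtain z where z: "\<forall>j\<in>{1..n}. z j \<in> \<int>" and x: "x = mat_vec n ?A z"
        unfolding lattice_def by auto
      have sp': "signed_perm_matrix n (\<lambda>a b. S b a)" using sp unfolding signed_perm_matrix_def by blast
      let ?w = "mat_vec n (\<lambda>a b. S b a) z"
      have w: "\<forall>j\<in>{1..n}. ?w j \<in> \<int>" using lat_int[OF sp' z] .
      have "mat_vec n S (mat_vec n ?A ?w) = mat_vec n (mmul n S ?A) ?w" by (rule mat_vec_mmul)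
      also have "\<dots> = mat_vec n (mmul n ?A S) ?w" by (rule mat_vec_cong[OF comm])
      also have "\<dots> = mat_vec n ?A (mat_vec n S ?w)" by (rule mat_vec_mmul[symmetric])
      also have "mat_vec n S ?w = mat_vec n (mmul n S (\<lambda>a b. S b a)) z" by (rule mat_vec_mmul)
      also have "mat_vec n ?A \<dots> = mat_vec n ?A z"
      proof (rule mat_vec_cong2, intro ballI)
        fix j assume j: "j\<in>{1..n}"
        have "mat_vec n (mmul n S (\<lambda>a b. S b a)) z j = (\<Sum>k=1..n. (if j = k then 1 else 0) * z k)"
          using j by (simp add: mat_vec_in ortho[OF sp])
        also have "\<dots> = (\<Sum>k=1..n. if j = k then z k else 0)" by (rule sum.cong) auto
        also have "\<dots> = z j" using j by simp
        finally show "mat_vec n (mmul n S (\<lambda>a b. S b a)) z j = z j" .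
      qed
      finally have "x = mat_vec n S (mat_vec n ?A ?w)" using x by simp
      moreover have "mat_vec n ?A ?w \<in> lattice n ?A" unfolding lattice_def using w by blast
      ultimately show "x \<in> mat_vec n S ` lattice n ?A" by blast
    qed
  qed
qed

lemma zrec:
  assumes n: "n \<ge> 2" and pq: "0 < p" "p < q" and j: "j \<in> {1..n}"
  shows "z j = mat_vec n (matB n p q) (mat_vec n (matA n p q) z) j"
proof -
  have "mat_vec n (matB n p q) (mat_vec n (matA n p q) z) j = mat_vec n (mmul n (matB n p q) (matA n p q)) z j"
    by (simp only: mat_vec_mmul)
  also have "\<dots> = (\<Sum>k=1..n. mmul n (matB n p q) (matA n p q) j k * z k)" using j by (rule mat_vec_in)
  also have "\<dots> = (\<Sum>k=1..n. if j = k then z k else 0)"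
    by (rule sum.cong) (use BA[OF n pq j] in auto)
  also have "\<dots> = z j" using j by simp
  finally show ?thesis by simp
qed

lemma colint:
  assumes n: "n \<ge> 2" and pq: "0 < p" "p < q"
    and eq: "mat_vec n S ` lattice n (matA n p q) = lattice n (matA n p q)"
    and k: "k \<in> {1..n}" and j: "j \<in> {1..n}"
  shows "mmul n (matB n p q) (mmul n S (matA n p q)) j k \<in> \<int>"
proof -
  let ?A = "matA n p q" and ?B = "matB n p q"
  let ?e = "\<lambda>j::nat. if j = k then 1 else (0::real)"
  have "mat_vec n ?A ?e \<in> lattice n ?A" unfolding lattice_def by auto
  then have "mat_vec n S (mat_vec n ?A ?e) \<in> lattice n ?A" using eq by blast
  then obtain z where z: "\<forall>j\<in>{1..n}. z j \<in> \<int>" and ze: "mat_vec n S (mat_vec n ?A ?e) = mat_vec n ?A z"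
    unfolding lattice_def by auto
  have "z j = mat_vec n ?B (mat_vec n ?A z) j" by (rule zrec[OF n pq j])
  also have "\<dots> = mat_vec n ?B (mat_vec n S (mat_vec n ?A ?e)) j" using ze by simp
  also have "\<dots> = mat_vec n (mmul n ?B (mmul n S ?A)) ?e j" by (simp only: mat_vec_mmul)
  also have "\<dots> = mmul n ?B (mmul n S ?A) j k" using mat_vec_unit[OF k j] .
  finally show ?thesis using z j by metis
qed

theorem theorem3:
  fixes n :: nat and p q :: real and S :: "nat \<Rightarrow> nat \<Rightarrow> real"
  assumes "n \<ge> 2" and "0 < p" and "p < q"
    and "signed_perm_matrix n S"
  shows "mat_vec n S ` lattice n (matA n p q) = lattice n (matA n p q) \<longleftrightarrow>
         (\<forall>i\<in>{1..<n}. \<forall>j\<in>{1..<n}. S i j = S (i+1) (j+1)) \<and>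
         (\<forall>i\<in>{1..<n}. S i n = - S (i+1) 1) \<and>
         (\<forall>j\<in>{1..<n}. S n j = - S 1 (j+1)) \<and>
         S n n = S 1 1"
proof
  assume "(\<forall>i\<in>{1..<n}. \<forall>j\<in>{1..<n}. S i j = S (i+1) (j+1)) \<and>
         (\<forall>i\<in>{1..<n}. S i n = - S (i+1) 1) \<and>
         (\<forall>j\<in>{1..<n}. S n j = - S 1 (j+1)) \<and>
         S n n = S 1 1"
  then show "mat_vec n S ` lattice n (matA n p q) = lattice n (matA n p q)"
    using backward[OF assms(1,4)] by blast
next
  assume eq: "mat_vec n S ` lattice n (matA n p q) = lattice n (matA n p q)"
  note n = assms(1) and pq = assms(2,3) and sp = assms(4)
  let ?A = "matA n p q" and ?B = "matB n p q"
  define sig where "sig k = (SOME i. i\<in>{1..n} \<and> S i k \<noteq> 0 \<and> (\<forall>i'\<in>{1..n}. S i' k \<noteq> 0 \<longrightarrow> i' = i))" for k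
  have sigp: "sig k \<in> {1..n} \<and> S (sig k) k \<noteq> 0 \<and> (\<forall>i'\<in>{1..n}. S i' k \<noteq> 0 \<longrightarrow> i' = sig k)" if k: "k \<in> {1..n}" for k
  proof -
    have "\<exists>i. i\<in>{1..n} \<and> S i k \<noteq> 0 \<and> (\<forall>i'\<in>{1..n}. S i' k \<noteq> 0 \<longrightarrow> i' = i)"
      using sp_col[OF sp k] by blast
    then show ?thesis unfolding sig_def by (rule someI_ex)
  qed
  define E where "E k = S (sig k) k" for k
  have Ev: "E k \<in> {-1,1}" if k: "k \<in> {1..n}" for k
  proof -
    have a: "sig k \<in> {1..n}" "S (sig k) k \<noteq> 0" using sigp[OF k] by blast+
    have "S (sig k) k \<in> {-1,0,1}" by (rule sp_val[OF sp a(1) k])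
    then show ?thesis using a(2) unfolding E_def by blast
  qed
  have Sform: "S i k = (if i = sig k then E k else 0)" if i: "i\<in>{1..n}" and k: "k \<in> {1..n}" for i k
  proof (cases "i = sig k")
    case True then show ?thesis unfolding E_def by simp
  next
    case False
    have "\<forall>i'\<in>{1..n}. S i' k \<noteq> 0 \<longrightarrow> i' = sig k" using sigp[OF k] by blast
    then have "S i k = 0" using i False by blast
    then show ?thesis using False by simp
  qed
  have sig_inj: "k = k'" if k: "k \<in> {1..n}" and k': "k' \<in> {1..n}" and s: "sig k = sig k'" for k k'
  proof -
    have a: "sig k \<in> {1..n}" "S (sig k) k \<noteq> 0" "S (sig k) k' \<noteq> 0" using sigp[OF k] sigp[OF k'] s by auto
    obtain j0 where "j0\<in>{1..n}" "\<forall>j'\<in>{1..n}. S (sig k) j' \<noteq> 0 \<longrightarrow> j' = j0"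
      using sp_row[OF sp a(1)] by blast
    then show ?thesis using a k k' by blast
  qed
  have sigR: "sig k \<in> {1..n}" if "k \<in> {1..n}" for k using sigp[OF that] by blast
  have sigU: "\<forall>i'\<in>{1..n}. S i' k \<noteq> 0 \<longrightarrow> i' = sig k" if "k \<in> {1..n}" for k using sigp[OF that] by blast
  have R1: "(sig k < n \<and> sig (k+1) = sig k + 1 \<and> E (k+1) = E k) \<or> (sig k = n \<and> sig (k+1) = 1 \<and> E (k+1) = - E k)"
    if k: "k \<in> {1..<n}" for k
  proof -
    have k1: "k \<in> {1..n}" "k+1 \<in> {1..n}" using k by auto
    have kk: "1 \<le> k" "k < n" using k by auto
    have H: "\<forall>j\<in>{1..n}. q * E k * ?B j (sig k) - p * E (k+1) * ?B j (sig (k+1)) \<in> \<int>"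
    proof
      fix j assume j: "j \<in> {1..n}"
      have "mmul n ?B (mmul n S ?A) j k = (\<Sum>i=1..n. ?B j i * (q * S i k - p * S i (k+1)))"
        unfolding mmul_def[of n ?B] by (intro sum.cong refl) (simp only: MA_lt[OF kk])
      also have "\<dots> = q * (\<Sum>i=1..n. ?B j i * S i k) - p * (\<Sum>i=1..n. ?B j i * S i (k+1))"
        by (simp add: sum_distrib_left sum_subtractf algebra_simps)
      also have "\<dots> = q * E k * ?B j (sig k) - p * E (k+1) * ?B j (sig (k+1))"
      proof -
        have s1: "(\<Sum>i=1..n. ?B j i * S i k) = ?B j (sig k) * S (sig k) k"
          by (rule colsum[where S=S and k=k and f="matB n p q j", OF sigR[OF k1(1)] sigU[OF k1(1)]])
        have s2: "(\<Sum>i=1..n. ?B j i * S i (k+1)) = ?B j (sig (k+1)) * S (sig (k+1)) (k+1)"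
          by (rule colsum[where S=S and k="k+1" and f="matB n p q j", OF sigR[OF k1(2)] sigU[OF k1(2)]])
        show ?thesis unfolding s1 s2 E_def by (simp only: mult_ac)
      qed
      finally show "q * E k * ?B j (sig k) - p * E (k+1) * ?B j (sig (k+1)) \<in> \<int>"
        using colint[OF n pq eq k1(1) j] by simp
    qed
    have ne: "sig k \<noteq> sig (k+1)" using sig_inj[OF k1] by auto
    from key[OF n pq sigR[OF k1(1)] sigR[OF k1(2)] ne Ev[OF k1(1)] Ev[OF k1(2)] H]
    show ?thesis .
  qed
  have R2: "(sig n < n \<and> sig 1 = sig n + 1 \<and> - E 1 = E n) \<or> (sig n = n \<and> sig 1 = 1 \<and> - E 1 = - E n)"
  proof -
    have k1: "n \<in> {1..n}" "1 \<in> {1..n}" using n by auto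
    have H: "\<forall>j\<in>{1..n}. q * E n * ?B j (sig n) - p * (- E 1) * ?B j (sig 1) \<in> \<int>"
    proof
      fix j assume j: "j \<in> {1..n}"
      have "mmul n ?B (mmul n S ?A) j n = (\<Sum>i=1..n. ?B j i * (q * S i n + p * S i 1))"
        unfolding mmul_def[of n ?B] by (intro sum.cong refl) (simp only: MA_n[OF n])
      also have "\<dots> = q * (\<Sum>i=1..n. ?B j i * S i n) + p * (\<Sum>i=1..n. ?B j i * S i 1)"
        by (simp add: sum_distrib_left sum.distrib algebra_simps)
      also have "\<dots> = q * E n * ?B j (sig n) - p * (- E 1) * ?B j (sig 1)"
      proof -
        have s1: "(\<Sum>i=1..n. ?B j i * S i n) = ?B j (sig n) * S (sig n) n"
          by (rule colsum[where S=S and k=n and f="matB n p q j", OF sigR[OF k1(1)] sigU[OF k1(1)]])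
        have s2: "(\<Sum>i=1..n. ?B j i * S i 1) = ?B j (sig 1) * S (sig 1) 1"
          by (rule colsum[where S=S and k=1 and f="matB n p q j", OF sigR[OF k1(2)] sigU[OF k1(2)]])
        show ?thesis unfolding s1 s2 E_def by (simp add: algebra_simps)
      qed
      finally show "q * E n * ?B j (sig n) - p * (- E 1) * ?B j (sig 1) \<in> \<int>"
        using colint[OF n pq eq k1(1) j] by simp
    qed
    have ne: "sig n \<noteq> sig 1" using sig_inj[OF k1] n by auto
    have e2: "- E 1 \<in> {-1,1}" using Ev[OF k1(2)] by auto
    from key[OF n pq sigR[OF k1(1)] sigR[OF k1(2)] ne Ev[OF k1(1)] e2 H]
    show ?thesis by simp
  qed
  have c1: "\<forall>i\<in>{1..<n}. \<forall>j\<in>{1..<n}. S i j = S (i+1) (j+1)"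
  proof (intro ballI)
    fix i j assume i: "i \<in> {1..<n}" and j: "j \<in> {1..<n}"
    have a: "S i j = (if i = sig j then E j else 0)" using i j by (intro Sform) auto
    have b: "S (i+1) (j+1) = (if i+1 = sig (j+1) then E (j+1) else 0)" using i j by (intro Sform) auto
    from R1[OF j] show "S i j = S (i+1) (j+1)"
    proof
      assume h: "sig j < n \<and> sig (j+1) = sig j + 1 \<and> E (j+1) = E j"
      then show ?thesis unfolding a b by simp
    next
      assume h: "sig j = n \<and> sig (j+1) = 1 \<and> E (j+1) = - E j"
      have "i \<noteq> n" "i \<noteq> 0" using i by auto
      then show ?thesis unfolding a b using h by simp
    qed
  qed
  have c2: "\<forall>i\<in>{1..<n}. S i n = - S (i+1) 1"
  proof
    fix i assume i: "i \<in> {1..<n}"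
    have a: "S i n = (if i = sig n then E n else 0)" using i by (intro Sform) auto
    have b: "S (i+1) 1 = (if i+1 = sig 1 then E 1 else 0)" using i by (intro Sform) auto
    from R2 show "S i n = - S (i+1) 1"
    proof
      assume h: "sig n < n \<and> sig 1 = sig n + 1 \<and> - E 1 = E n"
      then show ?thesis unfolding a b by auto
    next
      assume h: "sig n = n \<and> sig 1 = 1 \<and> - E 1 = - E n"
      have "i \<noteq> n" "i \<noteq> 0" using i by auto
      then show ?thesis unfolding a b using h by simp
    qed
  qed
  have c3: "\<forall>j\<in>{1..<n}. S n j = - S 1 (j+1)"
  proof
    fix j assume j: "j \<in> {1..<n}"
    have a: "S n j = (if n = sig j then E j else 0)" using j by (intro Sform) auto
    have b: "S 1 (j+1) = (if 1 = sig (j+1) then E (j+1) else 0)" using j by (intro Sform) auto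
    have sj: "sig j \<in> {1..n}" using j by (intro sigR) auto
    from R1[OF j] show "S n j = - S 1 (j+1)"
    proof
      assume h: "sig j < n \<and> sig (j+1) = sig j + 1 \<and> E (j+1) = E j"
      then show ?thesis unfolding a b using sj by simp
    next
      assume h: "sig j = n \<and> sig (j+1) = 1 \<and> E (j+1) = - E j"
      then show ?thesis unfolding a b by simp
    qed
  qed
  have c4: "S n n = S 1 1"
  proof -
    have a: "S n n = (if n = sig n then E n else 0)" using n by (intro Sform) auto
    have b: "S 1 1 = (if 1 = sig 1 then E 1 else 0)" using n by (intro Sform) auto
    have sn: "sig n \<in> {1..n}" using n by (intro sigR) auto
    from R2 show ?thesis
    proof
      assume h: "sig n < n \<and> sig 1 = sig n + 1 \<and> - E 1 = E n"
      then show ?thesis unfolding a b using sn by simp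
    next
      assume h: "sig n = n \<and> sig 1 = 1 \<and> - E 1 = - E n"
      then show ?thesis unfolding a b by simp
    qed
  qed
  show "(\<forall>i\<in>{1..<n}. \<forall>j\<in>{1..<n}. S i j = S (i+1) (j+1)) \<and>
         (\<forall>i\<in>{1..<n}. S i n = - S (i+1) 1) \<and>
         (\<forall>j\<in>{1..<n}. S n j = - S 1 (j+1)) \<and>
         S n n = S 1 1" using c1 c2 c3 c4 by (intro conjI)
qed

end
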